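(* Let $m\geqslant 8$ with $m\equiv 0\pmod 4$, $d=(m-2)/2$, $e=\binom{(d-1)/2}{2}$. Regard $a_0,\dots,a_m,\alpha$ as indeterminates over $\mathbb F_2$, let $f=\sum_{k=0}^{m}a_{m-k}x^k$, and let $L_\alpha f=\sum_{k=0}^{d}b_{d-k}x^k$ (so $b_0=a_1\alpha$). Then $b_0^{de}\,\Pi_d(L_\alpha f)$ is a polynomial in $\mathbb F_2[a_0,\dots,a_m,\alpha]$, each of whose monomials contains a product of exactly $(d+2)e$ factors $a_i$ (counted with multiplicity), and it is homogeneous of degree $(6d+4)e$ for the weight $w$ with $w(\alpha)=1$ and $w(a_i)=i$.
   Context: $D_\alpha f(x)=f(x+\alpha)+f(x)$. For $m\equiv 0\pmod 4$, $d=(m-2)/2$ and $f$ of degree at most $m$, $L_\alpha f$ is the unique polynomial of degree at most $d$ such that $(L_\alpha f)(x(x+\alpha))=D_\alpha f(x)$ (this exists and is unique also with $a_i,\alpha$ indeterminates). For $d$ odd and a polynomial $g=\sum_{k=0}^{d}b_{d-k}x^k$ of degree $d$ in characteristic 2, $g'=b_0x^{d-1}+b_2x^{d-3}+\dots+b_{d-1}=b_0\prod_{i=1}^{(d-1)/2}(x+\tau_i)^2$, and $\Pi_d(g)=\prod_{i\neq j}(g(\tau_i)-g(\tau_j))$, which is symmetric in the $\tau_i^2$ and hence a rational function in $b_0,\dots,b_d$ (a polynomial in $b_0,\dots,b_d$ and $1/b_0$); $\Pi_d(g)=0$ exactly when $g$ does not have distinct critical values. *)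

theory Defs
  imports "HOL-Library.Poly_Mapping" "HOL-Library.Z2" "HOL-Computational_Algebra.Polynomial"
begin

text \<open>Variables: index i (i \<le> m) is a_i, index m+1 is alpha.\<close>

definition F2_to :: "bit \<Rightarrow> 'k::field" where
  "F2_to c = (if c = 0 then 0 else 1)"

definition mpoly_eval :: "((nat \<Rightarrow>\<^sub>0 nat) \<Rightarrow>\<^sub>0 bit) \<Rightarrow> (nat \<Rightarrow> 'k::field) \<Rightarrow> 'k" where
  "mpoly_eval P v = (\<Sum>mon\<in>Poly_Mapping.keys P.
      F2_to (Poly_Mapping.lookup P mon) * (\<Prod>i\<in>Poly_Mapping.keys mon. v i ^ Poly_Mapping.lookup mon i))"

definition fpoly :: "nat \<Rightarrow> (nat \<Rightarrow> 'k::field) \<Rightarrow> 'k poly" where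
  "fpoly m a = (\<Sum>k\<le>m. monom (a (m - k)) k)"

definition D_alpha :: "'k::field \<Rightarrow> 'k poly \<Rightarrow> 'k poly" where
  "D_alpha \<alpha> f = pcompose f [:\<alpha>, 1:] + f"

definition L_alpha :: "nat \<Rightarrow> 'k::field \<Rightarrow> 'k poly \<Rightarrow> 'k poly" where
  "L_alpha d \<alpha> f = (THE g. degree g \<le> d \<and> pcompose g [:0, \<alpha>, 1:] = D_alpha \<alpha> f)"

definition Pi_d :: "nat \<Rightarrow> 'k::field poly \<Rightarrow> 'k" where
  "Pi_d d g = (let n = (d - 1) div 2; b0 = coeff g d;
      \<tau> = (SOME \<tau>. length \<tau> = n \<and> pderiv g = smult b0 (\<Prod>i<n. [:\<tau> ! i, 1:] ^ 2))
    in (\<Prod>i<n. \<Prod>j\<in>{..<n} - {i}. poly g (\<tau> ! i) - poly g (\<tau> ! j)))"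

end

theory Submission
  imports Defs "Jordan_Normal_Form.Determinant"
begin

lemma char2_two: assumes "CHAR('k::field) = 2" shows "(2::'k) = 0"
  using of_nat_CHAR[where 'a='k] assms by simp

lemma char2_add_self: assumes "CHAR('k::field) = 2" shows "(x::'k) + x = 0"
proof -
  have "x + x = 2 * x" by simp
  thus ?thesis using char2_two[OF assms] by simp
qed

lemma char2_neg: assumes "CHAR('k::field) = 2" shows "- (x::'k) = x"
  using char2_add_self[OF assms, of x] by (simp add: add_eq_0_iff)

lemma char2_diff: assumes "CHAR('k::field) = 2" shows "(x::'k) - y = x + y"
  using char2_neg[OF assms, of y] by (metis diff_conv_add_uminus)

lemma char2_of_nat: assumes "CHAR('k::field) = 2" shows "(of_nat n::'k) = (if even n then 0 else 1)"
proof (induction n)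
  case 0 then show ?case by simp
next
  case (Suc n) then show ?case using char2_two[OF assms] by (auto simp: algebra_simps)
qed

section \<open>Monomial evaluation and representability\<close>

definition meval :: "(nat \<Rightarrow>\<^sub>0 nat) \<Rightarrow> (nat \<Rightarrow> 'k::field) \<Rightarrow> 'k" where
  "meval mo v = (\<Prod>i\<in>Poly_Mapping.keys mo. v i ^ Poly_Mapping.lookup mo i)"

lemma meval_superset:
  assumes "finite K" "Poly_Mapping.keys mo \<subseteq> K"
  shows "meval mo v = (\<Prod>i\<in>K. v i ^ Poly_Mapping.lookup mo i)"
  unfolding meval_def
  by (rule prod.mono_neutral_left) (use assms in \<open>auto simp: in_keys_iff\<close>)

lemma meval_add: "meval (a + b) v = meval a v * meval b v"
proof -
  let ?K = "Poly_Mapping.keys a \<union> Poly_Mapping.keys b"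
  have f: "finite ?K" by simp
  have k: "Poly_Mapping.keys (a + b) \<subseteq> ?K" by (auto simp: in_keys_iff lookup_add)
  have "meval (a + b) v = (\<Prod>i\<in>?K. v i ^ Poly_Mapping.lookup (a+b) i)"
    by (rule meval_superset[OF f k])
  also have "\<dots> = (\<Prod>i\<in>?K. v i ^ Poly_Mapping.lookup a i * v i ^ Poly_Mapping.lookup b i)"
    by (simp add: lookup_add power_add)
  also have "\<dots> = (\<Prod>i\<in>?K. v i ^ Poly_Mapping.lookup a i) * (\<Prod>i\<in>?K. v i ^ Poly_Mapping.lookup b i)"
    by (rule prod.distrib)
  also have "\<dots> = meval a v * meval b v"
    by (simp add: meval_superset[OF f])
  finally show ?thesis .
qed

lemma meval_0[simp]: "meval 0 v = 1" by (simp add: meval_def)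

lemma meval_single: "meval (Poly_Mapping.single i (1::nat)) v = v i"
  by (simp add: meval_def)

definition good_mon :: "nat \<Rightarrow> nat \<Rightarrow> nat \<Rightarrow> (nat \<Rightarrow>\<^sub>0 nat) \<Rightarrow> bool" where
  "good_mon m D W mo \<longleftrightarrow> Poly_Mapping.keys mo \<subseteq> {..Suc m}
        \<and> (\<Sum>i\<le>m. Poly_Mapping.lookup mo i) = D
        \<and> Poly_Mapping.lookup mo (Suc m) + (\<Sum>i\<le>m. i * Poly_Mapping.lookup mo i) = W"

definition rep :: "nat \<Rightarrow> nat \<Rightarrow> nat \<Rightarrow> ((nat \<Rightarrow> 'k::field) \<Rightarrow> 'k) \<Rightarrow> bool" where
  "rep m D W F \<longleftrightarrow> (\<exists>M. (\<forall>mo\<in>#M. good_mon m D W mo) \<and> (\<forall>v. F v = (\<Sum>mo\<in>#M. meval mo v)))"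

lemma good_mon_add:
  assumes "good_mon m D1 W1 a" "good_mon m D2 W2 b"
  shows "good_mon m (D1 + D2) (W1 + W2) (a + b)"
proof -
  have "Poly_Mapping.keys (a + b) \<subseteq> Poly_Mapping.keys a \<union> Poly_Mapping.keys b"
    by (auto simp: in_keys_iff lookup_add)
  hence "Poly_Mapping.keys (a + b) \<subseteq> {..Suc m}"
    using assms unfolding good_mon_def by blast
  moreover have "(\<Sum>i\<le>m. Poly_Mapping.lookup (a+b) i) = D1 + D2"
    using assms unfolding good_mon_def by (simp add: lookup_add sum.distrib)
  moreover have "Poly_Mapping.lookup (a+b) (Suc m) + (\<Sum>i\<le>m. i * Poly_Mapping.lookup (a+b) i) = W1 + W2"
    using assms unfolding good_mon_def by (simp add: lookup_add sum.distrib algebra_simps)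
  ultimately show ?thesis unfolding good_mon_def by blast
qed

lemma rep_zero: "rep m D W (\<lambda>v. 0)"
  unfolding rep_def by (rule exI[of _ "{#}"]) simp

lemma rep_one: "rep m 0 0 (\<lambda>v. 1)"
  unfolding rep_def by (rule exI[of _ "{#0#}"]) (simp add: good_mon_def)

lemma rep_var: assumes "i \<le> m" shows "rep m 1 i (\<lambda>v. v i)"
  unfolding rep_def
proof (rule exI[of _ "{#Poly_Mapping.single i (1::nat)#}"], intro conjI allI ballI)
  fix mo assume "mo \<in># {#Poly_Mapping.single i (1::nat)#}"
  hence mo: "mo = Poly_Mapping.single i (1::nat)" by simp
  have l: "Poly_Mapping.lookup mo j = (if j = i then 1 else 0)" for j
    by (simp add: mo lookup_single)
  have s1: "(\<Sum>j\<le>m. Poly_Mapping.lookup mo j) = 1"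
    using assms by (simp add: l)
  have s2: "(\<Sum>j\<le>m. j * Poly_Mapping.lookup mo j) = i"
    using assms by (simp add: l if_distrib cong: if_cong)
  have k: "Poly_Mapping.keys mo = {i}" by (simp add: mo)
  show "good_mon m 1 i mo" unfolding good_mon_def
    using assms s1 s2 k l by auto
next
  fix v show "v i = (\<Sum>mo\<in>#{#Poly_Mapping.single i (1::nat)#}. meval mo v)"
    by (simp add: meval_def)
qed

lemma rep_alpha: "rep m 0 1 (\<lambda>v. v (Suc m))"
  unfolding rep_def
proof (rule exI[of _ "{#Poly_Mapping.single (Suc m) (1::nat)#}"], intro conjI allI ballI)
  fix mo assume "mo \<in># {#Poly_Mapping.single (Suc m) (1::nat)#}"
  hence mo: "mo = Poly_Mapping.single (Suc m) (1::nat)" by simp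
  have l: "Poly_Mapping.lookup mo j = (if j = Suc m then 1 else 0)" for j
    by (simp add: mo lookup_single)
  have k: "Poly_Mapping.keys mo = {Suc m}" by (simp add: mo)
  have s1: "(\<Sum>j\<le>m. Poly_Mapping.lookup mo j) = 0" by (simp add: l)
  have s2: "(\<Sum>j\<le>m. j * Poly_Mapping.lookup mo j) = 0" by (simp add: l)
  show "good_mon m 0 1 mo" unfolding good_mon_def
    using s1 s2 k l by auto
next
  fix v show "v (Suc m) = (\<Sum>mo\<in>#{#Poly_Mapping.single (Suc m) (1::nat)#}. meval mo v)"
    by (simp add: meval_def)
qed

lemma rep_cong: "rep m D W F \<Longrightarrow> (\<And>v. F v = G v) \<Longrightarrow> rep m D W G"
  unfolding rep_def by metis

lemma rep_cong': "rep m D W F \<Longrightarrow> D = D' \<Longrightarrow> W = W' \<Longrightarrow> (\<And>v. F v = G v) \<Longrightarrow> rep m D' W' G"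
  unfolding rep_def by metis

lemma rep_add: assumes "rep m D W F" "rep m D W G" shows "rep m D W (\<lambda>v. F v + G v)"
proof -
  obtain M1 where M1: "\<forall>mo\<in>#M1. good_mon m D W mo" "\<forall>v. F v = (\<Sum>mo\<in>#M1. meval mo v)"
    using assms(1) unfolding rep_def by blast
  obtain M2 where M2: "\<forall>mo\<in>#M2. good_mon m D W mo" "\<forall>v. G v = (\<Sum>mo\<in>#M2. meval mo v)"
    using assms(2) unfolding rep_def by blast
  show ?thesis unfolding rep_def
    by (rule exI[of _ "M1 + M2"]) (use M1 M2 in auto)
qed

lemma sum_mset_shift:
  "(\<Sum>mo\<in>#image_mset (\<lambda>y. x + y) M2. meval mo v) = meval x v * (\<Sum>mo\<in>#M2. meval mo (v::nat \<Rightarrow> 'k::field))"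
  by (induction M2) (simp_all add: meval_add algebra_simps)

lemma sum_mset_mult_mset:
  "(\<Sum>mo\<in>#(\<Sum>x\<in>#M1. image_mset (\<lambda>y. x + y) M2). meval mo v)
     = (\<Sum>mo\<in>#M1. meval mo v) * (\<Sum>mo\<in>#M2. meval mo (v::nat \<Rightarrow> 'k::field))"
proof (induction M1)
  case empty then show ?case by simp
next
  case (add x M1)
  have "(\<Sum>mo\<in>#(\<Sum>x\<in>#add_mset x M1. image_mset (\<lambda>y. x + y) M2). meval mo v)
     = (\<Sum>mo\<in>#image_mset (\<lambda>y. x + y) M2. meval mo v) + (\<Sum>mo\<in>#(\<Sum>x\<in>#M1. image_mset (\<lambda>y. x + y) M2). meval mo v)"
    by (simp only: image_mset_add_mset sum_mset.add_mset image_mset_union sum_mset.union)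
  also have "\<dots> = meval x v * (\<Sum>mo\<in>#M2. meval mo v) + (\<Sum>mo\<in>#M1. meval mo v) * (\<Sum>mo\<in>#M2. meval mo v)"
    by (simp only: sum_mset_shift add.IH)
  also have "\<dots> = (\<Sum>mo\<in>#add_mset x M1. meval mo v) * (\<Sum>mo\<in>#M2. meval mo v)"
    by (simp add: algebra_simps)
  finally show ?case .
qed

lemma rep_mult: assumes "rep m D1 W1 F" "rep m D2 W2 G"
  shows "rep m (D1 + D2) (W1 + W2) (\<lambda>v. F v * G v)"
proof -
  obtain M1 where M1: "\<forall>mo\<in>#M1. good_mon m D1 W1 mo" "\<forall>v. F v = (\<Sum>mo\<in>#M1. meval mo v)"
    using assms(1) unfolding rep_def by blast
  obtain M2 where M2: "\<forall>mo\<in>#M2. good_mon m D2 W2 mo" "\<forall>v. G v = (\<Sum>mo\<in>#M2. meval mo v)"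
    using assms(2) unfolding rep_def by blast
  let ?M = "\<Sum>x\<in>#M1. image_mset (\<lambda>y. x + y) M2"
  have "\<forall>mo\<in>#?M. good_mon m (D1 + D2) (W1 + W2) mo"
    using M1(1) M2(1) by (auto intro: good_mon_add)
  moreover have "\<forall>v. F v * G v = (\<Sum>mo\<in>#?M. meval mo v)"
    using M1(2) M2(2) sum_mset_mult_mset by metis
  ultimately show ?thesis unfolding rep_def by blast
qed

lemma rep_sum: assumes "finite A" "\<And>i. i \<in> A \<Longrightarrow> rep m D W (F i)"
  shows "rep m D W (\<lambda>v. \<Sum>i\<in>A. F i v)"
  using assms
proof (induction A rule: finite_induct)
  case empty then show ?case by (simp add: rep_zero)
next
  case (insert x A)
  have "rep m D W (\<lambda>v. F x v + (\<Sum>i\<in>A. F i v))"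
    by (rule rep_add) (use insert in auto)
  then show ?case using insert by simp
qed

lemma rep_prod: assumes "finite A" "\<And>i. i \<in> A \<Longrightarrow> rep m (D i) (W i) (F i)"
  shows "rep m (\<Sum>i\<in>A. D i) (\<Sum>i\<in>A. W i) (\<lambda>v. \<Prod>i\<in>A. F i v)"
  using assms
proof (induction A rule: finite_induct)
  case empty then show ?case by (simp add: rep_one)
next
  case (insert x A)
  have "rep m (D x + (\<Sum>i\<in>A. D i)) (W x + (\<Sum>i\<in>A. W i)) (\<lambda>v. F x v * (\<Prod>i\<in>A. F i v))"
    by (rule rep_mult) (use insert in auto)
  then show ?case using insert by simp
qed

lemma rep_pow: assumes "rep m D W F" shows "rep m (k * D) (k * W) (\<lambda>v. F v ^ k)"
proof (induction k)
  case 0 then show ?case by (simp add: rep_one)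
next
  case (Suc k)
  have "rep m (D + k * D) (W + k * W) (\<lambda>v. F v * F v ^ k)"
    by (rule rep_mult[OF assms Suc])
  then show ?case by simp
qed

lemma rep_ofnat_mult: assumes "CHAR('k::field) = 2" "rep m D W (F :: (nat \<Rightarrow> 'k) \<Rightarrow> 'k)"
  shows "rep m D W (\<lambda>v. of_nat k * F v)"
proof (cases "even k")
  case True then show ?thesis using char2_of_nat[OF assms(1), of k] by (simp add: rep_zero)
next
  case False then show ?thesis using char2_of_nat[OF assms(1), of k] assms(2) by simp
qed

lemma rep_neg: assumes "CHAR('k::field) = 2" "rep m D W (F :: (nat \<Rightarrow> 'k) \<Rightarrow> 'k)"
  shows "rep m D W (\<lambda>v. - F v)"
  by (rule rep_cong[OF assms(2)]) (simp add: char2_neg[OF assms(1)])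

lemma rep_diff: assumes "CHAR('k::field) = 2" "rep m D W (F :: (nat \<Rightarrow> 'k) \<Rightarrow> 'k)" "rep m D W G"
  shows "rep m D W (\<lambda>v. F v - G v)"
  by (rule rep_cong[OF rep_add[OF assms(2,3)]]) (simp add: char2_diff[OF assms(1)])

section \<open>From a representation to a poly mapping\<close>

lemma F2_to_add: assumes "CHAR('k::field) = 2" shows "(F2_to (a + b) :: 'k) = F2_to a + F2_to b"
  using char2_add_self[OF assms, of 1]
  by (cases a; cases b) (auto simp: F2_to_def)

lemma F2_to_0[simp]: "F2_to 0 = 0" by (simp add: F2_to_def)
lemma F2_to_1[simp]: "F2_to 1 = 1" by (simp add: F2_to_def)

lemma mpoly_eval_superset:
  assumes "finite K" "Poly_Mapping.keys P \<subseteq> K"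
  shows "mpoly_eval P v = (\<Sum>mo\<in>K. F2_to (Poly_Mapping.lookup P mo) * meval mo v)"
  unfolding mpoly_eval_def meval_def[symmetric]
  by (rule sum.mono_neutral_left) (use assms in \<open>auto simp: in_keys_iff\<close>)

lemma mpoly_eval_add: assumes "CHAR('k::field) = 2"
  shows "mpoly_eval (P + Q) (v :: nat \<Rightarrow> 'k) = mpoly_eval P v + mpoly_eval Q v"
proof -
  let ?K = "Poly_Mapping.keys P \<union> Poly_Mapping.keys Q"
  have f: "finite ?K" by simp
  have k: "Poly_Mapping.keys (P + Q) \<subseteq> ?K" by (auto simp: in_keys_iff lookup_add)
  have e: "F2_to (Poly_Mapping.lookup (P+Q) mo) = (F2_to (Poly_Mapping.lookup P mo) + F2_to (Poly_Mapping.lookup Q mo) :: 'k)" for mo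
    by (simp only: lookup_add F2_to_add[OF assms])
  have p: "mpoly_eval P v = (\<Sum>mo\<in>?K. F2_to (Poly_Mapping.lookup P mo) * meval mo v)"
    by (rule mpoly_eval_superset[OF f]) auto
  have q: "mpoly_eval Q v = (\<Sum>mo\<in>?K. F2_to (Poly_Mapping.lookup Q mo) * meval mo v)"
    by (rule mpoly_eval_superset[OF f]) auto
  show ?thesis
    unfolding mpoly_eval_superset[OF f k] p q
    by (simp only: e distrib_right sum.distrib)
qed

lemma mpoly_eval_single: "mpoly_eval (Poly_Mapping.single mo 1) v = meval mo v"
  by (simp add: mpoly_eval_def meval_def[symmetric])

lemma mpoly_eval_zero: "mpoly_eval 0 v = 0"
  by (simp add: mpoly_eval_def)

lemma rep_to_P:
  assumes "CHAR('k::field) = 2" "rep m D W (F :: (nat \<Rightarrow> 'k) \<Rightarrow> 'k)"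
  shows "\<exists>P :: (nat \<Rightarrow>\<^sub>0 nat) \<Rightarrow>\<^sub>0 bit. (\<forall>mo \<in> Poly_Mapping.keys P. good_mon m D W mo)
           \<and> (\<forall>v. mpoly_eval P v = F v)"
proof -
  obtain M where M: "\<forall>mo\<in>#M. good_mon m D W mo" "\<forall>v. F v = (\<Sum>mo\<in>#M. meval mo v)"
    using assms(2) unfolding rep_def by blast
  define P where "P = (\<Sum>mo\<in>#M. Poly_Mapping.single mo (1::bit))"
  have keys: "Poly_Mapping.keys P \<subseteq> set_mset M" unfolding P_def
  proof (induction M)
    case empty then show ?case by simp
  next
    case (add x M)
    show ?case
    proof
      fix y assume y: "y \<in> Poly_Mapping.keys (\<Sum>mo\<in>#add_mset x M. Poly_Mapping.single mo (1::bit))"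
      show "y \<in> set_mset (add_mset x M)"
      proof (cases "y = x")
        case True then show ?thesis by simp
      next
        case False
        with y have "y \<in> Poly_Mapping.keys (\<Sum>mo\<in>#M. Poly_Mapping.single mo (1::bit))"
          by (simp add: in_keys_iff lookup_add lookup_single)
        with add show ?thesis by auto
      qed
    qed
  qed
  have ev: "mpoly_eval P v = (\<Sum>mo\<in>#M. meval mo v)" for v :: "nat \<Rightarrow> 'k" unfolding P_def
  proof (induction M)
    case empty then show ?case by (simp add: mpoly_eval_zero)
  next
    case (add x M) then show ?case by (simp add: mpoly_eval_add[OF assms(1)] mpoly_eval_single)
  qed
  show ?thesis using keys M ev by (intro exI[of _ P]) auto
qed

section \<open>The polynomials g_k with x^k + (x+alpha)^k = g_k(x(x+alpha))\<close>

fun bb :: "nat \<Rightarrow> nat \<Rightarrow> bool" where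
  "bb 0 i = False"
| "bb (Suc 0) i = (i = 0)"
| "bb (Suc (Suc k)) i = (bb (Suc k) i \<noteq> (0 < i \<and> bb k (i - 1)))"

fun gk :: "'k::field \<Rightarrow> nat \<Rightarrow> 'k poly" where
  "gk a 0 = 0"
| "gk a (Suc 0) = [:a:]"
| "gk a (Suc (Suc k)) = Polynomial.smult a (gk a (Suc k)) + pCons 0 (gk a k)"

lemma bb_le: "bb k i \<Longrightarrow> 2 * i + 1 \<le> k"
proof (induction k i rule: bb.induct)
  case (3 k i)
  from "3.prems" have "bb (Suc k) i \<or> (0 < i \<and> bb k (i - 1))" by auto
  then show ?case
  proof
    assume "bb (Suc k) i" from "3.IH"(1)[OF this] show ?thesis by simp
  next
    assume h: "0 < i \<and> bb k (i - 1)" from "3.IH"(2)[OF h[THEN conjunct2]] h show ?thesis by simp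
  qed
qed auto

lemma coeff_gk: assumes "CHAR('k::field) = 2"
  shows "coeff (gk (a::'k) k) i = (if bb k i then a ^ (k - 2 * i) else 0)"
proof (induction a k arbitrary: i rule: gk.induct)
  case (1 a) then show ?case by simp
next
  case (2 a) then show ?case by (simp add: coeff_pCons split: nat.split)
next
  case (3 a k)
  have c: "coeff (gk a (Suc (Suc k))) i = a * coeff (gk a (Suc k)) i + (if i = 0 then 0 else coeff (gk a k) (i - 1))"
    by (cases i) auto
  show ?case
  proof (cases "bb (Suc k) i")
    case b1: True
    have e1: "a * a ^ (Suc k - 2 * i) = a ^ (Suc (Suc k) - 2 * i)"
    proof -
      have "Suc (Suc k) - 2 * i = Suc (Suc k - 2 * i)" using bb_le[OF b1] by simp
      thus ?thesis by simp
    qed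
    show ?thesis
    proof (cases "0 < i \<and> bb k (i - 1)")
      case True
      have e2: "a ^ (k - 2 * (i - 1)) = a ^ (Suc (Suc k) - 2 * i)"
        using True bb_le[of k "i - 1"] by (intro arg_cong[where f="\<lambda>n. a ^ n"]) auto
      show ?thesis using True b1 unfolding c 3 using e1 e2 char2_add_self[OF assms] by auto
    next
      case False
      show ?thesis using False b1 unfolding c 3 using e1 by auto
    qed
  next
    case b1: False
    show ?thesis
    proof (cases "0 < i \<and> bb k (i - 1)")
      case True
      have e2: "a ^ (k - 2 * (i - 1)) = a ^ (Suc (Suc k) - 2 * i)"
        using True bb_le[of k "i - 1"] by (intro arg_cong[where f="\<lambda>n. a ^ n"]) auto
      show ?thesis using True b1 unfolding c 3 using e2 by auto
    next
      case False
      show ?thesis using False b1 unfolding c 3 by auto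
    qed
  qed
qed

lemma pcompose_X_power: "pcompose ([:0, 1:] ^ k) q = q ^ k"
  by (induction k) (simp_all add: pcompose_mult pcompose_pCons one_pCons)

lemma gk_compose: assumes "CHAR('k::field) = 2"
  shows "pcompose (gk (a::'k) k) [:0, a, 1:] = [:a, 1:] ^ k + [:0, 1:] ^ k"
proof (induction a k rule: gk.induct)
  case (1 a)
  have "(1::'k poly) + 1 = [:1 + 1:]" by (simp add: one_pCons)
  then show ?case using char2_add_self[OF assms, of 1] by simp
next
  case (2 a)
  have "[:a, 1:] + [:0, 1:] = [:a, 1 + 1:]" by simp
  then show ?case using char2_add_self[OF assms, of 1] by (simp add: pcompose_pCons)
next
  case (3 a k)
  define A where "A = [:a, 1:]"
  define X where "X = [:0, 1::'k:]"
  define c where "c = [:a:]"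
  have q: "[:0, a, 1:] = X * A" by (simp add: X_def A_def)
  have Ac: "A = c + X" by (simp add: A_def c_def X_def)
  have cA: "c + A = X"
    using char2_add_self[OF assms, of a] by (simp add: A_def c_def X_def)
  have sm: "Polynomial.smult a p = c * p" for p by (simp add: c_def)
  have "pcompose (gk a (Suc (Suc k))) [:0, a, 1:]
      = Polynomial.smult a (pcompose (gk a (Suc k)) [:0, a, 1:]) + [:0, a, 1:] * pcompose (gk a k) [:0, a, 1:]"
    by (simp add: pcompose_add pcompose_smult pcompose_pCons)
  also have "\<dots> = c * (A ^ Suc k + X ^ Suc k) + (X * A) * (A ^ k + X ^ k)"
  proof -
    have i1: "pcompose (gk a (Suc k)) [:0,a,1:] = A ^ Suc k + X ^ Suc k"
      unfolding A_def X_def by (fact 3(1))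
    have i2: "pcompose (gk a k) [:0,a,1:] = A ^ k + X ^ k"
      unfolding A_def X_def by (fact 3(2))
    show ?thesis unfolding i1 i2 unfolding sm q by simp
  qed
  also have "\<dots> = (c + X) * A ^ Suc k + (c + A) * X ^ Suc k"
    by (simp add: algebra_simps)
  also have "\<dots> = A ^ Suc (Suc k) + X ^ Suc (Suc k)"
    unfolding cA Ac[symmetric] by simp
  finally show ?case by (simp add: A_def X_def)
qed

lemma pcompose_monom: "pcompose (monom c k) q = Polynomial.smult c (q ^ k)"
  by (simp add: monom_altdef pcompose_smult pcompose_X_power)

lemma L_alpha_eq:
  assumes ch: "CHAR('k::field) = 2" and m4: "m mod 4 = 0" and dd: "d = (m - 2) div 2" and m8: "m \<ge> 4"
  shows "L_alpha d (al::'k) (fpoly m a) = (\<Sum>k\<le>m. Polynomial.smult (a (m - k)) (gk al k))"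
proof -
  define g0 where "g0 = (\<Sum>k\<le>m. Polynomial.smult (a (m - k)) (gk al k))"
  have deg: "degree g0 \<le> d"
  proof (rule degree_le, intro allI impI)
    fix i assume "d < i"
    have "coeff (gk al k) i = 0" if "k \<le> m" for k
    proof -
      have "\<not> bb k i"
      proof
        assume "bb k i"
        from bb_le[OF this] that have "2 * i + 1 \<le> m" by simp
        with \<open>d < i\<close> dd m4 m8 show False by presburger
      qed
      thus ?thesis by (simp add: coeff_gk[OF ch])
    qed
    thus "coeff g0 i = 0" by (simp add: g0_def coeff_sum)
  qed
  have comp: "pcompose g0 [:0, al, 1:] = D_alpha al (fpoly m a)"
  proof -
    have "pcompose g0 [:0, al, 1:] = (\<Sum>k\<le>m. Polynomial.smult (a (m - k)) ([:al, 1:] ^ k + [:0, 1:] ^ k))"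
      by (simp add: g0_def pcompose_sum pcompose_smult gk_compose[OF ch])
    also have "\<dots> = D_alpha al (fpoly m a)"
    proof -
      have e1: "pcompose (\<Sum>k\<le>m. monom (a (m - k)) k) [:al, 1:] = (\<Sum>k\<le>m. Polynomial.smult (a (m - k)) ([:al, 1:] ^ k))"
        by (simp only: pcompose_sum pcompose_monom)
      have e2: "(\<Sum>k\<le>m. monom (a (m - k)) k) = (\<Sum>k\<le>m. Polynomial.smult (a (m - k)) ([:0, 1:] ^ k))"
        by (simp only: monom_altdef)
      show ?thesis unfolding D_alpha_def fpoly_def e1 unfolding e2
        by (simp only: smult_add_right sum.distrib)
    qed
    finally show ?thesis .
  qed
  have uniq: "g = g0" if "pcompose g [:0, al, 1:] = D_alpha al (fpoly m a)" for g
  proof -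
    have "pcompose (g - g0) [:0, al, 1:] = 0" using that comp by (simp add: pcompose_diff)
    hence "g - g0 = 0" by (rule pcompose_eq_0) simp
    thus ?thesis by simp
  qed
  show ?thesis unfolding L_alpha_def g0_def[symmetric]
  proof (rule the_equality)
    show "degree g0 \<le> d \<and> pcompose g0 [:0, al, 1:] = D_alpha al (fpoly m a)" using deg comp by simp
  next
    fix g assume "degree g \<le> d \<and> pcompose g [:0, al, 1:] = D_alpha al (fpoly m a)"
    hence "pcompose g [:0, al, 1:] = D_alpha al (fpoly m a)" by simp
    thus "g = g0" by (rule uniq)
  qed
qed

definition cf :: "nat \<Rightarrow> nat \<Rightarrow> (nat \<Rightarrow> 'k::field) \<Rightarrow> 'k" where
  "cf m i v = (\<Sum>k\<le>m. v (m - k) * (if bb k i then v (Suc m) ^ (k - 2 * i) else 0))"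

lemma coeff_L_alpha:
  assumes ch: "CHAR('k::field) = 2" and m4: "m mod 4 = 0" and dd: "d = (m - 2) div 2" and m8: "m \<ge> 4"
  shows "coeff (L_alpha d (al::'k) (fpoly m a)) i = cf m i (a(Suc m := al))"
  unfolding L_alpha_eq[OF assms] cf_def coeff_sum coeff_smult coeff_gk[OF ch]
proof (rule sum.cong)
  fix k assume "k \<in> {..m}"
  hence "m - k \<noteq> Suc m" by auto
  thus "a (m - k) * (if bb k i then al ^ (k - 2 * i) else 0) =
        (a(Suc m := al)) (m - k) * (if bb k i then (a(Suc m := al)) (Suc m) ^ (k - 2 * i) else 0)"
    by simp
qed simp

lemma rep_cf: "rep m 1 (m - 2 * i) (cf m i :: (nat \<Rightarrow> 'k::field) \<Rightarrow> 'k)"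
  unfolding cf_def
proof (rule rep_sum)
  fix k assume k: "k \<in> {..m}"
  show "rep m 1 (m - 2 * i) (\<lambda>v. v (m - k) * (if bb k i then v (Suc m) ^ (k - 2 * i) else (0::'k)))"
  proof (cases "bb k i")
    case True
    have "rep m (1 + (k - 2 * i) * 0) ((m - k) + (k - 2 * i) * 1) (\<lambda>v. v (m - k) * (v (Suc m) ^ (k - 2 * i) :: 'k))"
      by (rule rep_mult[OF rep_var rep_pow[OF rep_alpha]]) simp
    then show ?thesis
      by (rule rep_cong') (use True bb_le[OF True] k in auto)
  next
    case False then show ?thesis by (simp add: rep_zero)
  qed
qed simp

section \<open>Newton identities\<close>

lemma syn_div_coeff:
  fixes u :: "'k::field"
  assumes p: "[:-u, 1:] * q = p" and dq: "degree q \<le> N - 1" and N: "N \<ge> 1"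
  shows "k \<le> N - 1 \<Longrightarrow> coeff q (N - 1 - k) = (\<Sum>l\<le>k. coeff p (N - l) * u ^ (k - l))"
proof (induction k)
  have pe: "p = Polynomial.smult (-u) q + pCons 0 q"
    using p[symmetric] by (simp only: mult_pCons_left) simp
  have cp: "coeff p j = - u * coeff q j + (if j = 0 then 0 else coeff q (j - 1))" for j
    unfolding pe by (cases j) simp_all
  {
    case 0
    have "coeff q N = 0" using dq N by (intro coeff_eq_0) simp
    moreover have "coeff p N = - u * coeff q N + coeff q (N - 1)" using cp[of N] N by simp
    ultimately show ?case by simp
  next
    case (Suc k)
    define j where "j = N - 1 - k"
    have j1: "j \<ge> 1" and j2: "N - Suc k = j" and j3: "N - 1 - Suc k = j - 1"
      using Suc.prems by (auto simp: j_def)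
    have "coeff p j = - u * coeff q j + coeff q (j - 1)"
      using cp[of j] j1 by simp
    hence "coeff q (N - 1 - Suc k) = coeff p (N - Suc k) + u * coeff q (N - 1 - k)"
      unfolding j2 j3 j_def[symmetric] by (simp add: algebra_simps)
    also have "\<dots> = coeff p (N - Suc k) + u * (\<Sum>l\<le>k. coeff p (N - l) * u ^ (k - l))"
      using Suc by simp
    also have "\<dots> = (\<Sum>l\<le>Suc k. coeff p (N - l) * u ^ (Suc k - l))"
    proof -
      have "u * (\<Sum>l\<le>k. coeff p (N - l) * u ^ (k - l)) = (\<Sum>l\<le>k. coeff p (N - l) * u ^ (Suc k - l))"
        unfolding sum_distrib_left
      proof (rule sum.cong[OF refl])
        fix l assume "l \<in> {..k}"
        hence "Suc k - l = Suc (k - l)" by auto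
        thus "u * (coeff p (N - l) * u ^ (k - l)) = coeff p (N - l) * u ^ (Suc k - l)"
          by (simp only: power_Suc) (simp add: algebra_simps)
      qed
      thus ?thesis by (simp only: sum.atMost_Suc diff_self_eq_0 power_0) (simp add: algebra_simps)
    qed
    finally show ?case .
  }
qed

locale newton =
  fixes n :: nat and u :: "nat \<Rightarrow> 'k::field" and b0 :: 'k and H :: "'k poly"
  assumes H: "H = Polynomial.smult b0 (\<Prod>i<n. [:- u i, 1:])"
begin

definition c :: "nat \<Rightarrow> 'k" where "c l = coeff H (n - l)"
definition p :: "nat \<Rightarrow> 'k" where "p s = (\<Sum>i<n. u i ^ s)"

lemma degH: "degree H \<le> n"
proof -
  have "degree (\<Prod>i<n. [:- u i, 1:]) \<le> (\<Sum>i<n. degree [:- u i, 1:])"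
    using degree_prod_sum_le[of "{..<n}" "\<lambda>i. [:- u i, 1:]"] by (simp add: o_def)
  thus ?thesis by (simp add: H)
qed

lemma c0: "c 0 = b0"
proof -
  have "lead_coeff (\<Prod>i<n. [:- u i, 1:]) = 1" by (simp add: lead_coeff_prod)
  moreover have "degree (\<Prod>i<n. [:- u i, 1:]) = n"
    by (subst degree_prod_eq_sum_degree) auto
  moreover have "c 0 = coeff H n" by (simp add: c_def)
  ultimately show ?thesis by (simp add: H)
qed

lemma poly_H: "poly H x = (\<Sum>l\<le>n. c l * x ^ (n - l))"
proof -
  have "poly H x = (\<Sum>j\<le>n. coeff H j * x ^ j)"
    unfolding poly_altdef by (rule sum.mono_neutral_left) (use degH in \<open>auto simp: coeff_eq_0\<close>)
  also have "\<dots> = (\<Sum>l\<le>n. coeff H (n - l) * x ^ (n - l))"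
    by (rule sum.reindex_bij_witness[of _ "\<lambda>l. n - l" "\<lambda>l. n - l"]) auto
  finally show ?thesis by (simp add: c_def)
qed

lemma poly_H_root: "i < n \<Longrightarrow> poly H (u i) = 0"
  by (auto simp: H poly_prod)

lemma newton_high: assumes "n \<le> k" shows "(\<Sum>l\<le>n. c l * p (k - l)) = 0"
proof -
  have "(\<Sum>l\<le>n. c l * p (k - l)) = (\<Sum>i<n. u i ^ (k - n) * (\<Sum>l\<le>n. c l * u i ^ (n - l)))"
    unfolding p_def sum_distrib_left
  proof (subst sum.swap, intro sum.cong[OF refl])
    fix i l assume l: "l \<in> {..n}"
    have "k - l = (k - n) + (n - l)" using l assms by auto
    thus "c l * u i ^ (k - l) = u i ^ (k - n) * (c l * u i ^ (n - l))"
      by (simp add: power_add algebra_simps)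
  qed
  also have "\<dots> = 0" using poly_H_root by (simp add: poly_H[symmetric])
  finally show ?thesis .
qed

definition q :: "nat \<Rightarrow> 'k poly" where "q i = (\<Prod>j\<in>{..<n} - {i}. [:- u j, 1:])"

lemma pderiv_H: "pderiv H = Polynomial.smult b0 (\<Sum>i<n. q i)"
  by (simp add: H pderiv_smult pderiv_prod q_def pderiv_pCons)

lemma q_mult: "i < n \<Longrightarrow> [:- u i, 1:] * Polynomial.smult b0 (q i) = H"
  by (simp add: H q_def prod.remove[of "{..<n}" i])

lemma deg_q: "degree (Polynomial.smult b0 (q i)) \<le> n - 1" if "i < n"
proof -
  have "degree (q i) \<le> (\<Sum>j\<in>{..<n} - {i}. degree [:- u j, 1:])"
    using degree_prod_sum_le[of "{..<n} - {i}" "\<lambda>j. [:- u j, 1:]"] by (simp add: o_def q_def)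
  also have "\<dots> \<le> n - 1" using that by auto
  finally show ?thesis by (meson degree_smult_le order_trans)
qed

lemma newton_low: assumes "k < n" shows "(\<Sum>l\<le>k. c l * p (k - l)) = of_nat (n - k) * c k"
proof -
  have N: "n \<ge> 1" using assms by simp
  have "coeff (pderiv H) (n - 1 - k) = of_nat (n - k) * c k"
    using assms by (simp add: coeff_pderiv c_def Suc_diff_Suc)
  moreover have "coeff (pderiv H) (n - 1 - k) = (\<Sum>i<n. coeff (Polynomial.smult b0 (q i)) (n - 1 - k))"
    by (simp add: pderiv_H coeff_sum sum_distrib_left)
  moreover have "\<dots> = (\<Sum>i<n. \<Sum>l\<le>k. coeff H (n - l) * u i ^ (k - l))"
    by (rule sum.cong[OF refl], rule syn_div_coeff[OF q_mult deg_q N]) (use assms in auto)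
  moreover have "\<dots> = (\<Sum>l\<le>k. c l * p (k - l))"
    unfolding p_def c_def sum_distrib_left by (rule sum.swap)
  ultimately show ?thesis by simp
qed

lemma newton_all: assumes "1 \<le> s"
  shows "b0 * p s = (if s < n then of_nat (n - s) * c s else 0) - (\<Sum>l\<in>{1..min s n}. c l * p (s - l))"
proof -
  have split: "(\<Sum>l\<le>min s n. c l * p (s - l)) = c 0 * p s + (\<Sum>l\<in>{1..min s n}. c l * p (s - l))"
  proof -
    have "{..min s n} = insert 0 {1..min s n}" by auto
    thus ?thesis by simp
  qed
  show ?thesis
  proof (cases "s < n")
    case True
    then show ?thesis using newton_low[OF True] split c0 by (simp add: algebra_simps)
  next
    case False
    hence mn: "min s n = n" by simp
    show ?thesis using newton_high[of s] split c0 False unfolding mn by (simp add: eq_neg_iff_add_eq_0)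
  qed
qed

end

function NwF :: "(nat \<Rightarrow> 'k::field) \<Rightarrow> nat \<Rightarrow> nat \<Rightarrow> 'k" where
  "NwF cc n s = (if s = 0 then of_nat n else
     cc 0 ^ (s - 1) * (if s < n then of_nat (n - s) * cc s else 0)
     - (\<Sum>l\<in>{1..min s n}. cc l * cc 0 ^ (l - 1) * NwF cc n (s - l)))"
  by auto
termination by (relation "measure (\<lambda>(cc, n, s). s)") auto

declare NwF.simps[simp del]

lemma (in newton) NwF_eq: "b0 ^ s * p s = NwF c n s"
proof (induction s rule: less_induct)
  case (less s)
  show ?case
  proof (cases "s = 0")
    case True then show ?thesis by (simp add: NwF.simps p_def)
  next
    case False
    have "b0 ^ s * p s = b0 ^ (s - 1) * (b0 * p s)"
      using False by (cases s) auto
    also have "\<dots> = b0 ^ (s - 1) * (if s < n then of_nat (n - s) * c s else 0)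
        - (\<Sum>l\<in>{1..min s n}. c l * b0 ^ (l - 1) * (b0 ^ (s - l) * p (s - l)))"
    proof -
      have pt: "b0 ^ (s - 1) * (c l * p (s - l)) = c l * b0 ^ (l - 1) * (b0 ^ (s - l) * p (s - l))"
        if "l \<in> {1..min s n}" for l
      proof -
        have "s - 1 = (l - 1) + (s - l)" using that by auto
        thus ?thesis by (simp add: power_add algebra_simps)
      qed
      have se: "b0 ^ (s - 1) * (\<Sum>l\<in>{1..min s n}. c l * p (s - l))
          = (\<Sum>l\<in>{1..min s n}. c l * b0 ^ (l - 1) * (b0 ^ (s - l) * p (s - l)))"
        unfolding sum_distrib_left by (rule sum.cong[OF refl]) (rule pt)
      have "b0 * p s = (if s < n then of_nat (n - s) * c s else 0) - (\<Sum>l\<in>{1..min s n}. c l * p (s - l))"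
        using False by (intro newton_all) simp
      thus ?thesis unfolding se[symmetric] by (simp only: right_diff_distrib)
    qed
    also have "\<dots> = NwF c n s"
      using False less by (subst NwF.simps) (auto simp: c0 intro!: sum.cong)
    finally show ?thesis .
  qed
qed

section \<open>Even/odd decomposition and roots of the derivative\<close>

definition H0 :: "'k::field poly \<Rightarrow> nat \<Rightarrow> 'k poly" where
  "H0 g n = (\<Sum>j\<le>n. monom (coeff g (Suc (2 * j))) j)"
definition GG :: "'k::field poly \<Rightarrow> nat \<Rightarrow> 'k poly" where
  "GG g n = (\<Sum>j\<le>n. monom (coeff g (2 * j)) j)"

lemma coeff_pc2:
  "coeff (pcompose (\<Sum>j\<le>n. monom (f j) j) [:0, 0, 1:]) i = (if even i \<and> i div 2 \<le> n then f (i div 2) else (0::'k::field))"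
proof -
  have x2: "[:0, 0, 1:] = (monom 1 2 :: 'k poly)" by (simp add: monom_altdef power2_eq_square)
  have "pcompose (\<Sum>j\<le>n. monom (f j) j) [:0, 0, 1:] = (\<Sum>j\<le>n. monom (f j) (2 * j))"
    unfolding pcompose_sum pcompose_monom x2 monom_power by (simp add: smult_monom mult.commute)
  hence "coeff (pcompose (\<Sum>j\<le>n. monom (f j) j) [:0, 0, 1:]) i = (\<Sum>j\<le>n. if 2 * j = i then f j else 0)"
    by (simp add: coeff_sum coeff_monom)
  also have "\<dots> = (\<Sum>j\<le>n. if j = i div 2 \<and> even i then f j else 0)"
    by (rule sum.cong) auto
  also have "\<dots> = (if even i \<and> i div 2 \<le> n then f (i div 2) else 0)"
    by (cases "even i") (auto simp: sum.delta)
  finally show ?thesis .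
qed

lemma pderiv_g:
  assumes ch: "CHAR('k::field) = 2" and dg: "degree (g::'k poly) \<le> Suc (2 * n)"
  shows "pderiv g = pcompose (H0 g n) [:0, 0, 1:]"
proof (rule poly_eqI)
  fix i
  show "coeff (pderiv g) i = coeff (pcompose (H0 g n) [:0, 0, 1:]) i"
    unfolding H0_def coeff_pc2 coeff_pderiv
  proof (cases "even i")
    case True
    then obtain t where t: "i = 2 * t" by blast
    have "of_nat (Suc i) = (1::'k)" using char2_of_nat[OF ch, of "Suc i"] t by simp
    moreover have "t > n \<Longrightarrow> coeff g (Suc i) = 0" using dg t by (intro coeff_eq_0) simp
    ultimately show "of_nat (Suc i) * coeff g (Suc i) = (if even i \<and> i div 2 \<le> n then coeff g (Suc (2 * (i div 2))) else 0)"
      using t by auto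
  next
    case False
    have "of_nat (Suc i) = (0::'k)" using char2_of_nat[OF ch, of "Suc i"] False by simp
    thus "of_nat (Suc i) * coeff g (Suc i) = (if even i \<and> i div 2 \<le> n then coeff g (Suc (2 * (i div 2))) else 0)"
      using False by simp
  qed
qed

lemma coeff_pc_H0: "coeff (pcompose (H0 g n) [:0, 0, 1:]) k = (if even k \<and> k div 2 \<le> n then coeff g (Suc (2 * (k div 2))) else 0)"
  unfolding H0_def coeff_pc2 ..

lemma coeff_pCons0: "coeff (pCons 0 Y) i = (if i = 0 then 0 else coeff Y (i - 1))"
  by (cases i) simp_all

lemma g_split:
  assumes dg: "degree (g::'k::field poly) \<le> Suc (2 * n)"
  shows "g = pcompose (GG g n) [:0, 0, 1:] + pCons 0 (pcompose (H0 g n) [:0, 0, 1:])"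
proof (rule poly_eqI)
  fix i
  have c1: "coeff (pcompose (GG g n) [:0, 0, 1:]) i = (if even i \<and> i div 2 \<le> n then coeff g (2 * (i div 2)) else 0)"
    unfolding GG_def by (rule coeff_pc2[of "\<lambda>j. coeff g (2 * j)" n i])
  have c2: "coeff (pCons 0 (pcompose (H0 g n) [:0, 0, 1:])) i =
      (if i = 0 then 0 else if even (i - 1) \<and> (i - 1) div 2 \<le> n then coeff g (Suc (2 * ((i - 1) div 2))) else 0)"
  proof -
    have e: "coeff (pcompose (H0 g n) [:0, 0, 1:]) (i - 1) = (if even (i - 1) \<and> (i - 1) div 2 \<le> n then coeff g (Suc (2 * ((i - 1) div 2))) else 0)"
      by (rule coeff_pc_H0)
    show ?thesis unfolding coeff_pCons0[of _ i] e ..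
  qed
  show "coeff g i = coeff (pcompose (GG g n) [:0, 0, 1:] + pCons 0 (pcompose (H0 g n) [:0, 0, 1:])) i"
    unfolding coeff_add c1 c2
  proof (cases "even i")
    case True
    then obtain t where t: "i = 2 * t" by blast
    have z: "t > n \<Longrightarrow> coeff g i = 0" using dg t by (intro coeff_eq_0) simp
    show "coeff g i = (if even i \<and> i div 2 \<le> n then coeff g (2 * (i div 2)) else 0) +
      (if i = 0 then 0 else if even (i - 1) \<and> (i - 1) div 2 \<le> n then coeff g (Suc (2 * ((i - 1) div 2))) else 0)"
    proof -
      have p0: "i = 0 \<or> odd (i - 1)" using t by presburger
      have s2: "(if i = 0 then 0 else if even (i - 1) \<and> (i - 1) div 2 \<le> n then coeff g (Suc (2 * ((i - 1) div 2))) else 0) = 0"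
        using p0 by auto
      have s1: "(if even i \<and> i div 2 \<le> n then coeff g (2 * (i div 2)) else 0) = (if t \<le> n then coeff g i else 0)"
        using t by simp
      show ?thesis unfolding s1 s2 using z by simp
    qed
  next
    case False
    define t where "t = i div 2"
    have t: "i = Suc (2 * t)" using False unfolding t_def by presburger
    have z: "t > n \<Longrightarrow> coeff g i = 0" using dg t by (intro coeff_eq_0) simp
    show "coeff g i = (if even i \<and> i div 2 \<le> n then coeff g (2 * (i div 2)) else 0) +
      (if i = 0 then 0 else if even (i - 1) \<and> (i - 1) div 2 \<le> n then coeff g (Suc (2 * ((i - 1) div 2))) else 0)"
    proof -
      have p0: "i \<noteq> 0" "odd i" "even (i - 1)" using t by presburger+
      have s1: "(if even i \<and> i div 2 \<le> n then coeff g (2 * (i div 2)) else 0) = 0"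
        using p0 by simp
      have s2: "(if i = 0 then 0 else if even (i - 1) \<and> (i - 1) div 2 \<le> n then coeff g (Suc (2 * ((i - 1) div 2))) else 0)
          = (if t \<le> n then coeff g i else 0)"
        using t by simp
      show ?thesis unfolding s1 s2 using z by simp
    qed
  qed
qed

lemma poly_g_split:
  assumes dg: "degree (g::'k::field poly) \<le> Suc (2 * n)"
  shows "poly g x = poly (GG g n) (x ^ 2) + x * poly (H0 g n) (x ^ 2)"
proof -
  have "poly g x = poly (pcompose (GG g n) [:0, 0, 1:] + pCons 0 (pcompose (H0 g n) [:0, 0, 1:])) x"
    by (rule arg_cong[where f="\<lambda>p. poly p x", OF g_split[OF dg]])
  also have "\<dots> = poly (GG g n) (poly [:0, 0, 1:] x) + x * poly (H0 g n) (poly [:0, 0, 1:] x)"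
    by (simp only: poly_add poly_pCons poly_pcompose add_0_left)
  also have "poly [:0, 0, 1:] x = x ^ 2" by (simp add: power2_eq_square)
  finally show ?thesis .
qed

lemma coeff_H0: "coeff (H0 g n) j = (if j \<le> n then coeff g (Suc (2 * j)) else 0)"
  unfolding H0_def by (simp add: coeff_sum coeff_monom sum.delta)

lemma coeff_GG: "coeff (GG g n) j = (if j \<le> n then coeff g (2 * j) else 0)"
  unfolding GG_def by (simp add: coeff_sum coeff_monom sum.delta)

lemma degree_GG: "degree (GG g n) \<le> n"
  by (rule degree_le) (auto simp: coeff_GG)

lemma degree_H0: "degree (H0 g n) \<le> n"
  by (rule degree_le) (auto simp: coeff_H0)

lemma prod_mset_list: "(\<Prod>x\<in>#mset xs. f x) = (\<Prod>i<length xs. f (xs ! i))"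
proof (induction xs)
  case Nil then show ?case by simp
next
  case (Cons x xs)
  have "(\<Prod>i<length (x # xs). f ((x # xs) ! i)) = f x * (\<Prod>i<length xs. f (xs ! i))"
    by (simp del: prod.lessThan_Suc add: prod.lessThan_Suc_shift)
  then show ?case using Cons by simp
qed

lemma lin_sq: assumes ch: "CHAR('k::field) = 2"
  shows "[:t, 1:] ^ 2 = pcompose [:- (t ^ 2), 1:] [:0, 0, (1::'k):]"
proof -
  have "[:t, 1:] ^ 2 = [:t * t, t + t, 1:]" by (simp add: power2_eq_square algebra_simps)
  also have "\<dots> = [:t * t, 0, 1:]" using char2_add_self[OF ch, of t] by simp
  also have "\<dots> = pcompose [:- (t ^ 2), 1:] [:0, 0, 1:]"
    using char2_neg[OF ch, of "t^2"] by (simp add: pcompose_pCons power2_eq_square)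
  finally show ?thesis .
qed

lemma tau_exists:
  assumes ch: "CHAR('k::alg_closed_field) = 2" and dg: "degree (g::'k poly) \<le> Suc (2 * n)"
    and b0: "coeff g (Suc (2 * n)) \<noteq> 0"
  shows "\<exists>\<tau>. length \<tau> = n \<and> pderiv g = Polynomial.smult (coeff g (Suc (2 * n))) (\<Prod>i<n. [:\<tau> ! i, 1:] ^ 2)"
proof -
  define H where "H = H0 g n"
  have cHn: "coeff H n = coeff g (Suc (2 * n))" by (simp add: H_def coeff_H0)
  have dH: "degree H = n"
    using degree_H0[of g n] cHn b0 unfolding H_def by (metis le_antisym le_degree)
  have "H \<noteq> 0" using cHn b0 by auto
  from alg_closed_imp_factorization[OF this] obtain A where
    A: "size A = degree H" "H = Polynomial.smult (lead_coeff H) (\<Prod>x\<in>#A. [:- x, 1:])" by blast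
  obtain us where us: "mset us = A" using ex_mset by blast
  have lus: "length us = n" using A(1) dH us by (metis size_mset)
  define \<tau> where "\<tau> = map (\<lambda>x. SOME t. t ^ 2 = x) us"
  have tau: "(\<tau> ! i) ^ 2 = us ! i" if "i < n" for i
  proof -
    have "\<exists>t::'k. t ^ 2 = us ! i" by (rule nth_root_exists) simp
    hence "(SOME t. t ^ 2 = us ! i) ^ 2 = us ! i" by (rule someI_ex)
    thus ?thesis using that lus by (simp add: \<tau>_def)
  qed
  have "pderiv g = pcompose H [:0, 0, 1:]" unfolding H_def by (rule pderiv_g[OF ch dg])
  also have "H = Polynomial.smult (coeff g (Suc (2 * n))) (\<Prod>i<n. [:- (us ! i), 1:])"
  proof -
    have "lead_coeff H = coeff g (Suc (2 * n))" using dH cHn by simp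
    moreover have "(\<Prod>x\<in>#A. [:- x, 1:]) = (\<Prod>i<n. [:- (us ! i), 1:])"
      unfolding us[symmetric] prod_mset_list lus ..
    ultimately show ?thesis using A(2) by simp
  qed
  also have "pcompose \<dots> [:0, 0, 1:] = Polynomial.smult (coeff g (Suc (2 * n))) (\<Prod>i<n. [:\<tau> ! i, 1:] ^ 2)"
    unfolding pcompose_smult pcompose_prod
    by (rule arg_cong[where f="Polynomial.smult _"], rule prod.cong[OF refl]) (simp add: lin_sq[OF ch] tau)
  finally have pd: "pderiv g = Polynomial.smult (coeff g (Suc (2 * n))) (\<Prod>i<n. [:\<tau> ! i, 1:] ^ 2)" .
  have "length \<tau> = n" using lus by (simp add: \<tau>_def)
  with pd show ?thesis by blast
qed

lemma tau_props:
  assumes ch: "CHAR('k::field) = 2" and dg: "degree (g::'k poly) \<le> Suc (2 * n)"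
    and tl: "length \<tau> = n"
    and tp: "pderiv g = Polynomial.smult (coeff g (Suc (2 * n))) (\<Prod>i<n. [:\<tau> ! i, 1:] ^ 2)"
  shows "H0 g n = Polynomial.smult (coeff g (Suc (2 * n))) (\<Prod>i<n. [:- ((\<tau> ! i) ^ 2), 1:])"
    and "\<And>i. i < n \<Longrightarrow> poly g (\<tau> ! i) = poly (GG g n) ((\<tau> ! i) ^ 2)"
proof -
  define b where "b = coeff g (Suc (2 * n))"
  have e: "pcompose (H0 g n) [:0, 0, 1:] = pcompose (Polynomial.smult b (\<Prod>i<n. [:- ((\<tau> ! i) ^ 2), 1:])) [:0, 0, 1:]"
    unfolding pderiv_g[OF ch dg, symmetric] tp pcompose_smult pcompose_prod b_def
    by (simp add: lin_sq[OF ch])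
  have "pcompose (H0 g n - Polynomial.smult b (\<Prod>i<n. [:- ((\<tau> ! i) ^ 2), 1:])) [:0, 0, 1:] = 0"
    using e by (simp add: pcompose_diff)
  hence "H0 g n - Polynomial.smult b (\<Prod>i<n. [:- ((\<tau> ! i) ^ 2), 1:]) = 0"
    by (rule pcompose_eq_0) simp
  thus "H0 g n = Polynomial.smult (coeff g (Suc (2 * n))) (\<Prod>i<n. [:- ((\<tau> ! i) ^ 2), 1:])"
    by (simp add: b_def)
next
  fix i assume i: "i < n"
  have "poly (pderiv g) (\<tau> ! i) = 0"
  proof -
    have "poly [:\<tau> ! i, 1:] (\<tau> ! i) = 0" using char2_add_self[OF ch, of "\<tau> ! i"] by simp
    hence "poly ([:\<tau> ! i, 1:] ^ 2) (\<tau> ! i) = 0" by (simp only: poly_power) simp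
    hence "(\<Prod>j<n. poly ([:\<tau> ! j, 1:] ^ 2) (\<tau> ! i)) = 0"
      apply (rule_tac prod_zero) apply simp using i by blast
    thus ?thesis unfolding tp by (simp only: poly_smult poly_prod) simp
  qed
  hence "poly (H0 g n) ((\<tau> ! i) ^ 2) = 0"
    unfolding pderiv_g[OF ch dg] by (simp add: poly_pcompose power2_eq_square)
  thus "poly g (\<tau> ! i) = poly (GG g n) ((\<tau> ! i) ^ 2)"
    using poly_g_split[OF dg, of "\<tau> ! i"] by simp
qed

section \<open>Vandermonde and Hankel determinants\<close>

lemma det_leibniz: "det (mat n n f) = (\<Sum>p\<in>{p. p permutes {0..<n}}. signof p * (\<Prod>i=0..<n. f (i, p i)))"
proof -
  have "det (mat n n f) = (\<Sum>p\<in>{p. p permutes {0..<n}}. signof p * (\<Prod>i=0..<n. mat n n f $$ (i, p i)))"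
    by (rule det_def') simp
  also have "\<dots> = (\<Sum>p\<in>{p. p permutes {0..<n}}. signof p * (\<Prod>i=0..<n. f (i, p i)))"
  proof (rule sum.cong[OF refl])
    fix p assume "p \<in> {p. p permutes {0..<n}}"
    hence "i < n \<Longrightarrow> p i < n" for i using permutes_in_image[of p "{0..<n}" i] by auto
    thus "signof p * (\<Prod>i=0..<n. mat n n f $$ (i, p i)) = signof p * (\<Prod>i=0..<n. f (i, p i))"
      by (auto intro!: prod.cong)
  qed
  finally show ?thesis .
qed

lemma vandermonde_sq:
  fixes r :: "nat \<Rightarrow> 'a::field"
  shows "det (mat n n (\<lambda>(i,k). \<Sum>j<n. r j ^ (i + k))) = (\<Prod>i<n. \<Prod>l<i. r i - r l) ^ 2"
proof -
  define V where "V = mat n n (\<lambda>(i,k). r i ^ k)"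
  define P where "P k = (\<Prod>l<k. [:- r l, 1:])" for k
  define T where "T = mat n n (\<lambda>(j,k). coeff (P k) j)"
  have V: "V \<in> carrier_mat n n" and T: "T \<in> carrier_mat n n" by (auto simp: V_def T_def)
  have degP: "degree (P k) = k" for k
    unfolding P_def by (subst degree_prod_eq_sum_degree) auto
  have lcP: "coeff (P k) k = 1" for k
    using lead_coeff_prod[of "\<lambda>l. [:- r l, 1:]" "{..<k}"] degP[of k] by (simp add: P_def)
  have polyP: "poly (P k) x = (\<Prod>l<k. x - r l)" for k x
    by (simp add: P_def poly_prod)
  have hank: "mat n n (\<lambda>(i,k). \<Sum>j<n. r j ^ (i + k)) = transpose_mat V * V"
    by (rule eq_matI) (auto simp: V_def scalar_prod_def power_add atLeast0LessThan intro!: sum.cong)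
  have dT: "det T = 1"
  proof -
    have "upper_triangular T"
      unfolding upper_triangular_def T_def using degP by (auto intro!: coeff_eq_0)
    hence "det T = prod_list (diag_mat T)" by (rule det_upper_triangular[OF _ T])
    also have "\<dots> = 1" unfolding prod_list_diag_prod by (simp add: T_def lcP)
    finally show ?thesis .
  qed
  have VT: "V * T = mat n n (\<lambda>(i,k). \<Prod>l<k. r i - r l)"
  proof (rule eq_matI)
    fix i k assume ik: "i < dim_row (mat n n (\<lambda>(i,k). \<Prod>l<k. r i - r l))" "k < dim_col (mat n n (\<lambda>(i,k). \<Prod>l<k. r i - r l))"
    hence i: "i < n" and k: "k < n" by auto
    have "(V * T) $$ (i, k) = (\<Sum>j<n. r i ^ j * coeff (P k) j)"
      using i k by (simp add: V_def T_def scalar_prod_def atLeast0LessThan)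
    also have "\<dots> = (\<Sum>j<n. coeff (P k) j * r i ^ j)"
      by (simp add: mult.commute)
    also have "\<dots> = (\<Sum>j\<le>degree (P k). coeff (P k) j * r i ^ j)"
      by (rule sum.mono_neutral_right) (use k degP in \<open>auto simp: coeff_eq_0\<close>)
    also have "\<dots> = (\<Prod>l<k. r i - r l)" by (simp add: poly_altdef[symmetric] polyP)
    finally show "(V * T) $$ (i, k) = mat n n (\<lambda>(i,k). \<Prod>l<k. r i - r l) $$ (i, k)"
      using i k by simp
  qed (auto simp: V_def T_def)
  have dVT: "det (V * T) = (\<Prod>i<n. \<Prod>l<i. r i - r l)"
  proof -
    have "det (mat n n (\<lambda>(i,k). \<Prod>l<k. r i - r l)) = prod_list (diag_mat (mat n n (\<lambda>(i,k). \<Prod>l<k. r i - r l)))"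
      by (rule det_lower_triangular[of n]) auto
    also have "\<dots> = (\<Prod>i<n. \<Prod>l<i. r i - r l)"
      unfolding prod_list_diag_prod by (simp add: atLeast0LessThan)
    finally show ?thesis using VT by simp
  qed
  have dV: "det V = (\<Prod>i<n. \<Prod>l<i. r i - r l)"
    using det_mult[OF V T] dT dVT by simp
  have "det (transpose_mat V * V) = det V * det V"
    using det_mult[OF _ V, of "transpose_mat V"] det_transpose[OF V] V by simp
  thus ?thesis unfolding hank dV by (simp add: power2_eq_square)
qed

section \<open>Representability of the building blocks\<close>

definition CC :: "nat \<Rightarrow> nat \<Rightarrow> (nat \<Rightarrow> 'k::field) \<Rightarrow> nat \<Rightarrow> 'k" where
  "CC m n v l = cf m (Suc (2 * (n - l))) v"

definition Gv :: "nat \<Rightarrow> nat \<Rightarrow> (nat \<Rightarrow> 'k::field) \<Rightarrow> 'k poly" where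
  "Gv m n v = (\<Sum>j\<le>n. monom (cf m (2 * j) v) j)"

definition Qf :: "nat \<Rightarrow> nat \<Rightarrow> nat \<Rightarrow> (nat \<Rightarrow> 'k::field) \<Rightarrow> 'k" where
  "Qf m n s v = (\<Sum>j\<le>n * s. coeff (Gv m n v ^ s) j * CC m n v 0 ^ (n * s - j) * NwF (CC m n v) n j)"

lemma rep_CC: assumes "m = 4 * n + 4" "l \<le> n"
  shows "rep m 1 (4 * l + 2) (\<lambda>v. CC m n v l :: 'k::field)"
  unfolding CC_def by (rule rep_cong'[OF rep_cf]) (use assms in auto)

lemma rep_NwF: assumes ch: "CHAR('k::field) = 2" and mn: "m = 4 * n + 4"
  shows "rep m s (6 * s) (\<lambda>v. NwF (CC m n v :: nat \<Rightarrow> 'k) n s)"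
proof (induction s rule: less_induct)
  case (less s)
  show ?case
  proof (cases "s = 0")
    case True
    have "rep m 0 0 (\<lambda>v. of_nat n * (1::'k))" by (rule rep_ofnat_mult[OF ch rep_one])
    then show ?thesis using True by (simp add: NwF.simps)
  next
    case False
    have c0: "rep m 1 2 (\<lambda>v. CC m n v 0 :: 'k)" by (rule rep_cong'[OF rep_CC[OF mn, of 0]]) auto
    have t1: "rep m s (6 * s) (\<lambda>v. CC m n v 0 ^ (s - 1) * (if s < n then of_nat (n - s) * CC m n v s else (0::'k)))"
    proof (cases "s < n")
      case True
      have "rep m ((s - 1) * 1 + 1) ((s - 1) * 2 + (4 * s + 2)) (\<lambda>v. CC m n v 0 ^ (s - 1) * (of_nat (n - s) * CC m n v s :: 'k))"
        by (rule rep_mult[OF rep_pow[OF c0] rep_ofnat_mult[OF ch rep_CC[OF mn]]]) (use True in simp)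
      then show ?thesis by (rule rep_cong') (use True False in auto)
    next
      case False then show ?thesis by (simp add: rep_zero)
    qed
    have t2: "rep m s (6 * s) (\<lambda>v. \<Sum>l\<in>{1..min s n}. CC m n v l * CC m n v 0 ^ (l - 1) * NwF (CC m n v :: nat \<Rightarrow> 'k) n (s - l))"
    proof (rule rep_sum)
      fix l assume l: "l \<in> {1..min s n}"
      have "rep m (1 + (l - 1) * 1 + (s - l)) (4 * l + 2 + (l - 1) * 2 + 6 * (s - l))
          (\<lambda>v. CC m n v l * CC m n v 0 ^ (l - 1) * NwF (CC m n v :: nat \<Rightarrow> 'k) n (s - l))"
        by (rule rep_mult[OF rep_mult[OF rep_CC[OF mn] rep_pow[OF c0]] less]) (use l False in auto)
      then show "rep m s (6 * s) (\<lambda>v. CC m n v l * CC m n v 0 ^ (l - 1) * NwF (CC m n v :: nat \<Rightarrow> 'k) n (s - l))"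
        by (rule rep_cong') (use l in auto)
    qed simp
    have "rep m s (6 * s) (\<lambda>v. CC m n v 0 ^ (s - 1) * (if s < n then of_nat (n - s) * CC m n v s else (0::'k))
        - (\<Sum>l\<in>{1..min s n}. CC m n v l * CC m n v 0 ^ (l - 1) * NwF (CC m n v :: nat \<Rightarrow> 'k) n (s - l)))"
      by (rule rep_diff[OF ch t1 t2])
    then show ?thesis by (rule rep_cong) (use False in \<open>simp add: NwF.simps[of _ n s]\<close>)
  qed
qed

lemma coeff_Gv: "coeff (Gv m n v) i = (if i \<le> n then cf m (2 * i) v else 0)"
  unfolding Gv_def by (simp add: coeff_sum coeff_monom sum.delta)

lemma degree_Gv: "degree (Gv m n v) \<le> n"
  by (rule degree_le) (auto simp: coeff_Gv)

lemma coeff_Gv_pow_zero: "j > n * s \<Longrightarrow> coeff (Gv m n v ^ s) j = 0"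
proof -
  assume j: "j > n * s"
  have "degree (Gv m n v ^ s) \<le> n * s"
    by (rule order_trans[OF degree_power_le]) (use degree_Gv[of m n v] in \<open>simp add: mult.commute\<close>)
  thus ?thesis using j by (intro coeff_eq_0) simp
qed

lemma rep_Gv_pow: assumes mn: "m = 4 * n + 4"
  shows "rep m s (s * m - 4 * j) (\<lambda>v. coeff (Gv m n v ^ s) j :: 'k::field)"
proof (induction s arbitrary: j)
  case 0
  show ?case
  proof (cases "j = 0")
    case True then show ?thesis by (simp add: rep_one)
  next
    case False then show ?thesis by (simp add: rep_zero)
  qed
next
  case (Suc s)
  have e: "coeff (Gv m n v ^ Suc s) j = (\<Sum>i\<le>j. coeff (Gv m n v) i * coeff (Gv m n v ^ s) (j - i))" for v :: "nat \<Rightarrow> 'k"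
    by (simp only: power_Suc coeff_mult)
  have "rep m (Suc s) (Suc s * m - 4 * j) (\<lambda>v. \<Sum>i\<le>j. coeff (Gv m n v) i * coeff (Gv m n v ^ s) (j - i) :: 'k)"
  proof (rule rep_sum)
    fix i assume i: "i \<in> {..j}"
    show "rep m (Suc s) (Suc s * m - 4 * j) (\<lambda>v. coeff (Gv m n v) i * coeff (Gv m n v ^ s) (j - i) :: 'k)"
    proof (cases "i \<le> n \<and> j - i \<le> n * s")
      case True
      have "rep m (1 + s) ((m - 2 * (2 * i)) + (s * m - 4 * (j - i))) (\<lambda>v. cf m (2 * i) v * coeff (Gv m n v ^ s) (j - i) :: 'k)"
        by (rule rep_mult[OF rep_cf Suc])
      then show ?thesis
      proof (rule rep_cong')
        have h1: "4 * (j - i) \<le> 4 * (n * s)" using True by simp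
        have h2: "4 * (n * s) \<le> s * m" using mn by (simp add: algebra_simps)
        have h3: "4 * i \<le> m" using True mn by simp
        have h4: "i \<le> j" using i by simp
        have h5: "Suc s * m = m + s * m" by simp
        show "m - 2 * (2 * i) + (s * m - 4 * (j - i)) = Suc s * m - 4 * j"
          unfolding h5 using h1 h2 h3 h4 by linarith
      next
        fix v :: "nat \<Rightarrow> 'k"
        show "cf m (2 * i) v * coeff (Gv m n v ^ s) (j - i) = coeff (Gv m n v) i * coeff (Gv m n v ^ s) (j - i)"
          using True by (simp add: coeff_Gv)
      qed simp
    next
      case False
      have z: "(0::'k) = coeff (Gv m n v) i * coeff (Gv m n v ^ s) (j - i)" for v :: "nat \<Rightarrow> 'k"
        using False coeff_Gv_pow_zero[of n s "j - i" m v] by (auto simp: coeff_Gv)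
      show ?thesis by (rule rep_cong[OF rep_zero]) (rule z)
    qed
  qed simp
  then show ?case by (rule rep_cong) (rule e[symmetric])
qed

lemma rep_Qf: assumes ch: "CHAR('k::field) = 2" and mn: "m = 4 * n + 4"
  shows "rep m ((n + 1) * s) (s * (m + 2 * n)) (Qf m n s :: (nat \<Rightarrow> 'k) \<Rightarrow> 'k)"
  unfolding Qf_def
proof (rule rep_sum)
  fix j assume j: "j \<in> {..n * s}"
  have c0: "rep m 1 2 (\<lambda>v. CC m n v 0 :: 'k)" by (rule rep_cong'[OF rep_CC[OF mn, of 0]]) auto
  have "rep m (s + (n * s - j) * 1 + j) ((s * m - 4 * j) + (n * s - j) * 2 + 6 * j)
     (\<lambda>v. coeff (Gv m n v ^ s) j * CC m n v 0 ^ (n * s - j) * NwF (CC m n v :: nat \<Rightarrow> 'k) n j)"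
    by (rule rep_mult[OF rep_mult[OF rep_Gv_pow[OF mn] rep_pow[OF c0]] rep_NwF[OF ch mn]])
  then show "rep m ((n + 1) * s) (s * (m + 2 * n)) (\<lambda>v. coeff (Gv m n v ^ s) j * CC m n v 0 ^ (n * s - j) * NwF (CC m n v :: nat \<Rightarrow> 'k) n j)"
  proof (rule rep_cong')
    have h1: "4 * j \<le> 4 * (n * s)" using j by simp
    have h2: "4 * (n * s) \<le> s * m" using mn by (simp add: algebra_simps)
    have h3: "j \<le> n * s" using j by simp
    have h5: "s * (m + 2 * n) = s * m + 2 * (n * s)" by (simp add: algebra_simps)
    show "s * m - 4 * j + (n * s - j) * 2 + 6 * j = s * (m + 2 * n)"
      unfolding h5 using h1 h2 h3 by linarith
    have h6: "(n + 1) * s = n * s + s" by simp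
    show "s + (n * s - j) * 1 + j = (n + 1) * s" unfolding h6 using h3 by linarith
  qed simp
qed simp

lemma signof_char2: assumes ch: "CHAR('k::field) = 2" shows "(of_int (sign p) :: 'k) = 1"
  unfolding sign_def using char2_neg[OF ch, of 1] by simp

lemma sum_perm_idx: fixes n :: nat assumes "p permutes {0..<n}"
  shows "(\<Sum>i=0..<n. i + p i) = n * (n - 1)"
proof -
  have "(\<Sum>i=0..<n. p i) = (\<Sum>i=0..<n. i)"
    using sum.permute[OF assms, of "\<lambda>i. i"] by (simp add: o_def)
  moreover have "(\<Sum>i=0..<n. i) * 2 = n * (n - (1::nat))"
    by (induction n) (auto simp: algebra_simps)
  ultimately show ?thesis by (simp add: sum.distrib)
qed

lemma pairs_char2: fixes r :: "nat \<Rightarrow> 'k::field" assumes ch: "CHAR('k::field) = 2"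
  shows "(\<Prod>i<n. \<Prod>j\<in>{..<n} - {i}. (r i - r j :: 'k)) = (\<Prod>i<n. \<Prod>l<i. r i - r l) ^ 2"
proof -
  have split: "(\<Prod>j\<in>{..<n} - {i}. r i - r j) = (\<Prod>l<i. r i - r l) * (\<Prod>j\<in>{Suc i..<n}. r i - r j)" if "i < n" for i
  proof -
    have "{..<n} - {i} = {..<i} \<union> {Suc i..<n}" using that by auto
    moreover have "{..<i} \<inter> {Suc i..<n} = {}" by auto
    ultimately show ?thesis by (simp add: prod.union_disjoint)
  qed
  have sw: "(\<Prod>i<n. \<Prod>j\<in>{Suc i..<n}. r i - r j) = (\<Prod>j<n. \<Prod>i<j. r j - r i)"
  proof (induction n)
    case 0 then show ?case by simp
  next
    case (Suc n)
    have "(\<Prod>i<Suc n. \<Prod>j\<in>{Suc i..<Suc n}. r i - r j) = (\<Prod>i<n. (\<Prod>j\<in>{Suc i..<n}. r i - r j) * (r i - r n))"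
    proof -
      have "(\<Prod>i<Suc n. \<Prod>j\<in>{Suc i..<Suc n}. r i - r j) = (\<Prod>i<n. \<Prod>j\<in>{Suc i..<Suc n}. r i - r j)"
        by simp
      also have "\<dots> = (\<Prod>i<n. (\<Prod>j\<in>{Suc i..<n}. r i - r j) * (r i - r n))"
        by (rule prod.cong[OF refl]) (simp add: prod.atLeastLessThan_Suc)
      finally show ?thesis .
    qed
    also have "\<dots> = (\<Prod>j<n. \<Prod>i<j. r j - r i) * (\<Prod>i<n. r n - r i)"
      using Suc by (simp add: prod.distrib char2_diff[OF ch] add.commute)
    also have "\<dots> = (\<Prod>j<Suc n. \<Prod>i<j. r j - r i)" by simp
    finally show ?case .
  qed
  have "(\<Prod>i<n. \<Prod>j\<in>{..<n} - {i}. r i - r j) = (\<Prod>i<n. (\<Prod>l<i. r i - r l) * (\<Prod>j\<in>{Suc i..<n}. r i - r j))"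
    by (rule prod.cong[OF refl]) (simp add: split)
  also have "\<dots> = (\<Prod>i<n. \<Prod>l<i. r i - r l) * (\<Prod>i<n. \<Prod>l<i. r i - r l)"
    by (simp add: prod.distrib sw)
  finally show ?thesis by (simp add: power2_eq_square)
qed


lemma deg_L:
  assumes ch: "CHAR('k::field) = 2" and m4: "m mod 4 = 0" and dd: "d = (m - 2) div 2" and m8: "m \<ge> 4"
  shows "degree (L_alpha d (al::'k) (fpoly m a)) \<le> d"
proof (rule degree_le, intro allI impI)
  fix i assume di: "d < i"
  have "coeff (L_alpha d al (fpoly m a)) i = cf m i (a(Suc m := al))" by (rule coeff_L_alpha[OF assms])
  also have "\<dots> = 0" unfolding cf_def
  proof (rule sum.neutral, intro ballI)
    fix k assume k: "k \<in> {..m}"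
    have "\<not> bb k i"
    proof
      assume "bb k i"
      from bb_le[OF this] k have "2 * i + 1 \<le> m" by simp
      with di dd m4 m8 show False by presburger
    qed
    thus "(a(Suc m := al)) (m - k) * (if bb k i then (a(Suc m := al)) (Suc m) ^ (k - 2 * i) else 0) = 0" by simp
  qed
  finally show "coeff (L_alpha d al (fpoly m a)) i = 0" .
qed

lemma key:
  fixes a :: "nat \<Rightarrow> 'k::alg_closed_field" and al :: 'k
  assumes ch: "CHAR('k) = 2" and m4: "m mod 4 = 0" and dd: "d = (m - 2) div 2" and m8: "m \<ge> 8"
    and nd: "n = (d - 1) div 2" and mn: "m = 4 * n + 4" and dn: "d = Suc (2 * n)"
    and b0: "coeff (L_alpha d al (fpoly m a)) d \<noteq> 0"
  shows "(\<Sum>p\<in>{p. p permutes {0..<n}}. of_int (sign p) * (\<Prod>i=0..<n. Qf m n (i + p i) (a(Suc m := al))))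
     = coeff (L_alpha d al (fpoly m a)) d ^ (n * (n * (n - 1))) * Pi_d d (L_alpha d al (fpoly m a))"
proof -
  define v where "v = a(Suc m := al)"
  define g where "g = L_alpha d al (fpoly m a)"
  define b where "b = coeff g d"
  have m4': "m \<ge> 4" using m8 by simp
  have cg: "coeff g i = cf m i v" for i unfolding g_def v_def by (rule coeff_L_alpha[OF ch m4 dd m4'])
  have dg: "degree g \<le> Suc (2 * n)" unfolding g_def dn[symmetric] by (rule deg_L[OF ch m4 dd m4'])
  have CC0: "CC m n v 0 = b" by (simp add: CC_def b_def cg dn)
  have b0': "coeff g (Suc (2 * n)) \<noteq> 0" using b0 dn by (simp add: g_def)
  have ex: "\<exists>\<tau>. length \<tau> = n \<and> pderiv g = Polynomial.smult (coeff g d) (\<Prod>i<n. [:\<tau> ! i, 1:] ^ 2)"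
    using tau_exists[OF ch dg b0'] dn by simp
  define \<tau> where "\<tau> = (SOME \<tau>. length \<tau> = n \<and> pderiv g = Polynomial.smult (coeff g d) (\<Prod>i<n. [:\<tau> ! i, 1:] ^ 2))"
  have tp: "length \<tau> = n \<and> pderiv g = Polynomial.smult (coeff g d) (\<Prod>i<n. [:\<tau> ! i, 1:] ^ 2)"
    unfolding \<tau>_def by (rule someI_ex[OF ex])
  have Pi: "Pi_d d g = (\<Prod>i<n. \<Prod>j\<in>{..<n} - {i}. poly g (\<tau> ! i) - poly g (\<tau> ! j))"
    unfolding Pi_d_def Let_def nd[symmetric] \<tau>_def ..
  define u where "u i = (\<tau> ! i) ^ 2" for i
  have tp': "pderiv g = Polynomial.smult (coeff g (Suc (2 * n))) (\<Prod>i<n. [:\<tau> ! i, 1:] ^ 2)"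
    using tp dn by simp
  have H: "H0 g n = Polynomial.smult b (\<Prod>i<n. [:- u i, 1:])"
    using tau_props(1)[OF ch dg tp[THEN conjunct1] tp'] dn by (simp add: u_def b_def)
  have rg: "i < n \<Longrightarrow> poly g (\<tau> ! i) = poly (GG g n) (u i)" for i
    using tau_props(2)[OF ch dg tp[THEN conjunct1] tp'] by (simp add: u_def)
  interpret N: newton n u b "H0 g n" by unfold_locales (rule H)
  have cN: "N.c = CC m n v"
  proof
    fix l show "N.c l = CC m n v l" by (simp add: N.c_def coeff_H0 CC_def cg)
  qed
  have Nw: "b ^ s * N.p s = NwF (CC m n v) n s" for s using N.NwF_eq[of s] cN by simp
  have GGv: "GG g n = Gv m n v" unfolding GG_def Gv_def by (simp add: cg)
  define r where "r i = poly g (\<tau> ! i)" for i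
  have r: "i < n \<Longrightarrow> r i = poly (Gv m n v) (u i)" for i using rg GGv by (simp add: r_def)
  have Qr: "Qf m n s v = b ^ (n * s) * (\<Sum>j<n. r j ^ s)" for s
  proof -
    have dG: "degree (Gv m n v ^ s) \<le> n * s"
      by (rule order_trans[OF degree_power_le]) (use degree_Gv[of m n v] in \<open>simp add: mult.commute\<close>)
    have "Qf m n s v = (\<Sum>j\<le>n * s. coeff (Gv m n v ^ s) j * b ^ (n * s - j) * (b ^ j * N.p j))"
      unfolding Qf_def CC0 Nw ..
    also have "\<dots> = (\<Sum>j\<le>n * s. b ^ (n * s) * (coeff (Gv m n v ^ s) j * N.p j))"
    proof (rule sum.cong[OF refl])
      fix j assume "j \<in> {..n * s}"
      hence "b ^ (n * s) = b ^ (n * s - j) * b ^ j" by (simp add: power_add[symmetric])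
      thus "coeff (Gv m n v ^ s) j * b ^ (n * s - j) * (b ^ j * N.p j) = b ^ (n * s) * (coeff (Gv m n v ^ s) j * N.p j)"
        by (simp add: algebra_simps)
    qed
    also have "\<dots> = b ^ (n * s) * (\<Sum>i<n. \<Sum>j\<le>n * s. coeff (Gv m n v ^ s) j * u i ^ j)"
    proof -
      have s1: "(\<Sum>j\<le>n * s. coeff (Gv m n v ^ s) j * N.p j) = (\<Sum>i<n. \<Sum>j\<le>n * s. coeff (Gv m n v ^ s) j * u i ^ j)"
        unfolding N.p_def sum_distrib_left by (rule sum.swap)
      show ?thesis unfolding sum_distrib_left[symmetric] s1 ..
    qed
    also have "\<dots> = b ^ (n * s) * (\<Sum>i<n. r i ^ s)"
    proof -
      have "(\<Sum>j\<le>n * s. coeff (Gv m n v ^ s) j * u i ^ j) = r i ^ s" if "i < n" for i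
      proof -
        have "(\<Sum>j\<le>n * s. coeff (Gv m n v ^ s) j * u i ^ j) = (\<Sum>j\<le>degree (Gv m n v ^ s). coeff (Gv m n v ^ s) j * u i ^ j)"
          by (rule sum.mono_neutral_right) (use dG in \<open>auto simp: coeff_eq_0\<close>)
        also have "\<dots> = poly (Gv m n v ^ s) (u i)" by (simp add: poly_altdef)
        also have "\<dots> = r i ^ s" using r[OF that] by (simp add: poly_power)
        finally show ?thesis .
      qed
      thus ?thesis by simp
    qed
    finally show ?thesis .
  qed
  have "(\<Sum>p\<in>{p. p permutes {0..<n}}. of_int (sign p) * (\<Prod>i=0..<n. Qf m n (i + p i) v))
      = (\<Sum>p\<in>{p. p permutes {0..<n}}. of_int (sign p) * (b ^ (n * (n * (n - 1))) * (\<Prod>i=0..<n. \<Sum>j<n. r j ^ (i + p i))))"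
  proof (rule sum.cong[OF refl])
    fix p assume "p \<in> {p. p permutes {0..<n}}"
    hence pp: "p permutes {0..<n}" by simp
    have e1: "(\<Prod>i=0..<n. Qf m n (i + p i) v) = (\<Prod>i=0..<n. b ^ (n * (i + p i))) * (\<Prod>i=0..<n. \<Sum>j<n. r j ^ (i + p i))"
      unfolding Qr prod.distrib power_mult ..
    have e3: "(\<Sum>i=0..<n. n * (i + p i)) = n * (n * (n - 1))"
      using sum_perm_idx[OF pp] by (simp add: sum_distrib_left[symmetric])
    have e2: "(\<Prod>i=0..<n. b ^ (n * (i + p i))) = b ^ (n * (n * (n - 1)))"
      unfolding e3[symmetric] power_sum ..
    show "of_int (sign p) * (\<Prod>i=0..<n. Qf m n (i + p i) v) = of_int (sign p) * (b ^ (n * (n * (n - 1))) * (\<Prod>i=0..<n. \<Sum>j<n. r j ^ (i + p i)))"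
      unfolding e1 e2 ..
  qed
  also have "\<dots> = b ^ (n * (n * (n - 1))) * det (mat n n (\<lambda>(i,k). \<Sum>j<n. r j ^ (i + k)))"
    unfolding det_leibniz by (simp add: sum_distrib_left algebra_simps)
  also have "\<dots> = b ^ (n * (n * (n - 1))) * Pi_d d g"
    unfolding vandermonde_sq Pi pairs_char2[OF ch] r_def ..
  finally show ?thesis unfolding v_def[symmetric] b_def g_def .
qed


lemma two_choose: "2 * (n choose 2) = n * (n - 1)"
proof (induction n)
  case 0 then show ?case by simp
next
  case (Suc n)
  have "(Suc n choose 2) = (n choose 1) + (n choose 2)" by (simp add: numeral_2_eq_2)
  then show ?case using Suc by (cases n) (auto simp: algebra_simps)
qed

theorem lemma2p6:
  fixes m d e :: nat
  assumes "m \<ge> 8" and "m mod 4 = 0"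
    and "d = (m - 2) div 2" and "e = ((d - 1) div 2) choose 2"
    and "CHAR('k::alg_closed_field) = 2"
  shows "\<exists>P :: (nat \<Rightarrow>\<^sub>0 nat) \<Rightarrow>\<^sub>0 bit.
     (\<forall>mon \<in> Poly_Mapping.keys P.
        Poly_Mapping.keys mon \<subseteq> {..Suc m}
        \<and> (\<Sum>i\<le>m. Poly_Mapping.lookup mon i) = (d + 2) * e
        \<and> Poly_Mapping.lookup mon (Suc m) + (\<Sum>i\<le>m. i * Poly_Mapping.lookup mon i) = (6 * d + 4) * e)
   \<and> (\<forall>(a :: nat \<Rightarrow> 'k) (\<alpha> :: 'k).
        coeff (L_alpha d \<alpha> (fpoly m a)) d \<noteq> 0 \<longrightarrow>
        mpoly_eval P (a(Suc m := \<alpha>))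
          = coeff (L_alpha d \<alpha> (fpoly m a)) d ^ (d * e) * Pi_d d (L_alpha d \<alpha> (fpoly m a)))"
proof -
  note m8 = assms(1) and m4 = assms(2) and dd = assms(3) and ee = assms(4) and ch = assms(5)
  define n where "n = (d - 1) div 2"
  have mn: "m = 4 * n + 4" using m8 m4 dd unfolding n_def by presburger
  have dn: "d = Suc (2 * n)" using m8 m4 dd unfolding n_def by presburger
  have e2: "n * (n - 1) = 2 * e" using two_choose[of n] ee n_def by simp
  define Fin where "Fin v = CC m n v 0 ^ e * (\<Sum>p\<in>{p. p permutes {0..<n}}. of_int (sign p) * (\<Prod>i=0..<n. Qf m n (i + p i) v))"
    for v :: "nat \<Rightarrow> 'k"
  have c0: "rep m 1 2 (\<lambda>v. CC m n v 0 :: 'k)" by (rule rep_cong'[OF rep_CC[OF mn, of 0]]) auto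
  have rperm: "rep m ((n + 1) * (n * (n - 1))) (n * (n - 1) * (m + 2 * n))
      (\<lambda>v. of_int (sign p) * (\<Prod>i=0..<n. Qf m n (i + p i) v) :: 'k)" if pp: "p \<in> {p. p permutes {0..<n}}" for p
  proof -
    have pp': "p permutes {0..<n}" using pp by simp
    have "rep m (\<Sum>i=0..<n. (n + 1) * (i + p i)) (\<Sum>i=0..<n. (i + p i) * (m + 2 * n))
        (\<lambda>v. \<Prod>i=0..<n. Qf m n (i + p i) v :: 'k)"
      by (rule rep_prod[OF finite_atLeastLessThan rep_Qf[OF ch mn]])
    then show ?thesis
    proof (rule rep_cong')
      show "(\<Sum>i=0..<n. (n + 1) * (i + p i)) = (n + 1) * (n * (n - 1))"
        unfolding sum_distrib_left[symmetric] sum_perm_idx[OF pp'] ..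
      show "(\<Sum>i=0..<n. (i + p i) * (m + 2 * n)) = n * (n - 1) * (m + 2 * n)"
        using sum_perm_idx[OF pp'] by (simp add: sum_distrib_right[symmetric])
    qed (simp add: signof_char2[OF ch])
  qed
  have "rep m (e * 1 + (n + 1) * (n * (n - 1))) (e * 2 + n * (n - 1) * (m + 2 * n)) Fin"
    unfolding Fin_def by (rule rep_mult[OF rep_pow[OF c0] rep_sum[OF finite_permutations[OF finite_atLeastLessThan] rperm]])
  hence repF: "rep m ((d + 2) * e) ((6 * d + 4) * e) Fin"
  proof (rule rep_cong')
    show "e * 1 + (n + 1) * (n * (n - 1)) = (d + 2) * e" unfolding e2 dn by (simp add: algebra_simps)
    show "e * 2 + n * (n - 1) * (m + 2 * n) = (6 * d + 4) * e" unfolding e2 dn mn by (simp add: algebra_simps)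
  qed simp
  obtain P :: "(nat \<Rightarrow>\<^sub>0 nat) \<Rightarrow>\<^sub>0 bit" where
    P: "\<forall>mo \<in> Poly_Mapping.keys P. good_mon m ((d + 2) * e) ((6 * d + 4) * e) mo" "\<forall>v. mpoly_eval P v = Fin v"
    using rep_to_P[OF ch repF] by blast
  show ?thesis
  proof (intro exI[of _ P] conjI ballI allI impI)
    fix mo assume "mo \<in> Poly_Mapping.keys P"
    hence "good_mon m ((d + 2) * e) ((6 * d + 4) * e) mo" using P(1) by blast
    thus "Poly_Mapping.keys mo \<subseteq> {..Suc m}"
      "(\<Sum>i\<le>m. Poly_Mapping.lookup mo i) = (d + 2) * e"
      "Poly_Mapping.lookup mo (Suc m) + (\<Sum>i\<le>m. i * Poly_Mapping.lookup mo i) = (6 * d + 4) * e"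
      unfolding good_mon_def by blast+
  next
    fix a :: "nat \<Rightarrow> 'k" and al :: 'k
    assume b0: "coeff (L_alpha d al (fpoly m a)) d \<noteq> 0"
    have "mpoly_eval P (a(Suc m := al)) = Fin (a(Suc m := al))" using P(2) by blast
    also have "\<dots> = CC m n (a(Suc m := al)) 0 ^ e * (coeff (L_alpha d al (fpoly m a)) d ^ (n * (n * (n - 1))) * Pi_d d (L_alpha d al (fpoly m a)))"
      unfolding Fin_def key[OF ch m4 dd m8 n_def mn dn b0] ..
    also have "CC m n (a(Suc m := al)) 0 = coeff (L_alpha d al (fpoly m a)) d"
      using coeff_L_alpha[OF ch m4 dd, of al a d] m8 dn by (simp add: CC_def)
    also have "coeff (L_alpha d al (fpoly m a)) d ^ e * (coeff (L_alpha d al (fpoly m a)) d ^ (n * (n * (n - 1))) * Pi_d d (L_alpha d al (fpoly m a)))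
       = coeff (L_alpha d al (fpoly m a)) d ^ (d * e) * Pi_d d (L_alpha d al (fpoly m a))"
    proof -
      have "e + n * (n * (n - 1)) = d * e" unfolding e2 dn by (simp add: algebra_simps)
      thus ?thesis by (simp add: power_add[symmetric])
    qed
    finally show "mpoly_eval P (a(Suc m := al)) = coeff (L_alpha d al (fpoly m a)) d ^ (d * e) * Pi_d d (L_alpha d al (fpoly m a))" .
  qed
qed

end
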